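(* Let $b,c_1,c_2$ be positive integers, let $\alpha/\beta$ be the right lobster $\mathcal{L}^{c_1,c_2}_b$, and let $c=\min(c_1,c_2)$. Then the minimal elements of $\mathrm{SET}(\alpha/\beta)$ are in bijection with the words in the letters $B$ and $C$ having exactly $b$ occurrences of $B$ and $c$ occurrences of $C$. Consequently $\mathrm{SET}(\alpha/\beta)$ has $\binom{b+c}{b}$ minimal elements, and $S^{\mathrm{col}}_{\alpha/\beta}$ is one of them.
   Context: Rows of skew diagrams are numbered from the bottom. The right lobster $\mathcal{L}^{c_1,c_2}_b$ is the skew diagram $\alpha/\beta$ with $\alpha=(b+1+c_2,b+1,b+1+c_1)$, $\beta=(b+1,1,b+1)$: a bottom row of $c_2$ cells in columns $b+2,\ldots,b+1+c_2$, a middle row of $b$ cells in columns $2,\ldots,b+1$, and a top row of $c_1$ cells in columns $b+2,\ldots,b+1+c_1$. $\mathrm{SET}(\alpha/\beta)$ is the set of bijective fillings with $1,\ldots,N$ ($N=b+c_1+c_2$) whose rows increase left to right and columns increase bottom to top. For $1\le i\le N-1$, $\pi_i(T)=T$ if $i+1$ is in a strictly higher row than $i$, $\pi_i(T)=s_i(T)$ (swap $i$ and $i+1$) if $i+1$ is in a strictly lower row than $i$, and $\pi_i(T)=0$ otherwise; the poset order is $T\le T'$ iff $T'$ is obtained from $T$ by a sequence of operators $\pi_i$ (all intermediate results nonzero); minimal elements are those with no strictly smaller element. $S^{\mathrm{col}}_{\alpha/\beta}$ is the tableau filled with $1,\ldots,N$ consecutively along columns bottom to top, from the leftmost column rightward.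 *)

theory Defs
  imports Main
begin

(* Cells are pairs (row, column); rows numbered from 1 at the bottom, columns from 1 at the left.
   Row r of alpha/beta consists of the columns beta_r < col <= alpha_r, where alpha_r = alpha ! (r-1). *)
definition skew_cells :: "nat list \<Rightarrow> nat list \<Rightarrow> (nat \<times> nat) set" where
  "skew_cells \<alpha> \<beta> = {(r, c). 1 \<le> r \<and> r \<le> length \<alpha> \<and> \<beta> ! (r - 1) < c \<and> c \<le> \<alpha> ! (r - 1)}"

definition skew_size :: "nat list \<Rightarrow> nat list \<Rightarrow> nat" where
  "skew_size \<alpha> \<beta> = card (skew_cells \<alpha> \<beta>)"

definition SET :: "nat list \<Rightarrow> nat list \<Rightarrow> ((nat \<times> nat) \<Rightarrow> nat) set" where
  "SET \<alpha> \<beta> = {T.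
     (\<forall>x. x \<notin> skew_cells \<alpha> \<beta> \<longrightarrow> T x = 0) \<and>
     bij_betw T (skew_cells \<alpha> \<beta>) {1..skew_size \<alpha> \<beta>} \<and>
     (\<forall>x\<in>skew_cells \<alpha> \<beta>. \<forall>y\<in>skew_cells \<alpha> \<beta>. fst x = fst y \<and> snd x < snd y \<longrightarrow> T x < T y) \<and>
     (\<forall>x\<in>skew_cells \<alpha> \<beta>. \<forall>y\<in>skew_cells \<alpha> \<beta>. snd x = snd y \<and> fst x < fst y \<longrightarrow> T x < T y)}"

definition row_of :: "nat list \<Rightarrow> nat list \<Rightarrow> ((nat \<times> nat) \<Rightarrow> nat) \<Rightarrow> nat \<Rightarrow> nat" where
  "row_of \<alpha> \<beta> T k = fst (THE x. x \<in> skew_cells \<alpha> \<beta> \<and> T x = k)"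

definition swap_entries :: "nat \<Rightarrow> ((nat \<times> nat) \<Rightarrow> nat) \<Rightarrow> ((nat \<times> nat) \<Rightarrow> nat)" where
  "swap_entries i T = (\<lambda>x. if T x = i then i + 1 else if T x = i + 1 then i else T x)"

(* the operator pi_i; None represents 0 *)
definition pi_op :: "nat list \<Rightarrow> nat list \<Rightarrow> nat \<Rightarrow> ((nat \<times> nat) \<Rightarrow> nat) \<Rightarrow> ((nat \<times> nat) \<Rightarrow> nat) option" where
  "pi_op \<alpha> \<beta> i T =
     (if row_of \<alpha> \<beta> T i < row_of \<alpha> \<beta> T (i + 1) then Some T
      else if row_of \<alpha> \<beta> T (i + 1) < row_of \<alpha> \<beta> T i then Some (swap_entries i T)
      else None)"

definition pi_step :: "nat list \<Rightarrow> nat list \<Rightarrow> (((nat \<times> nat) \<Rightarrow> nat) \<times> ((nat \<times> nat) \<Rightarrow> nat)) set" where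
  "pi_step \<alpha> \<beta> = {(U, V). U \<in> SET \<alpha> \<beta> \<and>
      (\<exists>i. 1 \<le> i \<and> i \<le> skew_size \<alpha> \<beta> - 1 \<and> pi_op \<alpha> \<beta> i U = Some V)}"

definition set_le :: "nat list \<Rightarrow> nat list \<Rightarrow> ((nat \<times> nat) \<Rightarrow> nat) \<Rightarrow> ((nat \<times> nat) \<Rightarrow> nat) \<Rightarrow> bool" where
  "set_le \<alpha> \<beta> T T' \<longleftrightarrow> (T, T') \<in> (pi_step \<alpha> \<beta>)\<^sup>*"

definition minimal_SET :: "nat list \<Rightarrow> nat list \<Rightarrow> ((nat \<times> nat) \<Rightarrow> nat) set" where
  "minimal_SET \<alpha> \<beta> = {T \<in> SET \<alpha> \<beta>.
      \<not> (\<exists>T'\<in>SET \<alpha> \<beta>. T' \<noteq> T \<and> set_le \<alpha> \<beta> T' T)}"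

(* S^col: fill 1..N along columns bottom to top, leftmost column first *)
definition S_col :: "nat list \<Rightarrow> nat list \<Rightarrow> (nat \<times> nat) \<Rightarrow> nat" where
  "S_col \<alpha> \<beta> x = (if x \<in> skew_cells \<alpha> \<beta>
     then card {y \<in> skew_cells \<alpha> \<beta>. snd y < snd x \<or> (snd y = snd x \<and> fst y \<le> fst x)}
     else 0)"

definition lobster_alpha :: "nat \<Rightarrow> nat \<Rightarrow> nat \<Rightarrow> nat list" where
  "lobster_alpha b c1 c2 = [b + 1 + c2, b + 1, b + 1 + c1]"

definition lobster_beta :: "nat \<Rightarrow> nat list" where
  "lobster_beta b = [b + 1, 1, b + 1]"

datatype letter = B | C

definition BC_words :: "nat \<Rightarrow> nat \<Rightarrow> letter list set" where
  "BC_words nb nc = {w. length (filter (\<lambda>x. x = B) w) = nb \<and> length (filter (\<lambda>x. x = C) w) = nc}"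

end

theory Submission
  imports Defs
begin

definition occ :: "nat \<Rightarrow> nat list \<Rightarrow> nat" where
  "occ r xs = length (filter (\<lambda>x. x = r) xs)"

lemma occ_simps[simp]: "occ r [] = 0" "occ r (x # xs) = (if x = r then Suc (occ r xs) else occ r xs)"
  "occ r (xs @ ys) = occ r xs + occ r ys"
  by (auto simp: occ_def)

lemma occ_replicate[simp]: "occ r (replicate n x) = (if x = r then n else 0)"
  by (induction n) auto

lemma occ_take_Suc: "p < length w \<Longrightarrow> occ r (take (Suc p) w) = occ r (take p w) + (if w!p = r then 1 else 0)"
  by (simp add: take_Suc_conv_app_nth)

lemma occ_take_mono: "p \<le> q \<Longrightarrow> occ r (take p w) \<le> occ r (take q w)"
proof -
  assume "p \<le> q"
  then obtain d where "q = p + d" by (metis le_add_diff_inverse)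
  then show ?thesis by (simp add: take_add)
qed

lemma occ_take_le: "occ r (take p w) \<le> occ r w"
  by (metis append_take_drop_id le_add1 occ_simps(3))

lemma occ_exists: "k < occ r w \<Longrightarrow> \<exists>p<length w. w!p = r \<and> occ r (take p w) = k"
proof (induction w arbitrary: k)
  case Nil then show ?case by simp
next
  case (Cons a w)
  show ?case
  proof (cases "a = r")
    case True
    show ?thesis
    proof (cases k)
      case 0 then show ?thesis using True by (intro exI[of _ 0]) auto
    next
      case (Suc k')
      then have "k' < occ r w" using Cons.prems True by simp
      then obtain p where "p < length w" "w!p = r" "occ r (take p w) = k'" using Cons.IH by blast
      then show ?thesis using True Suc by (intro exI[of _ "Suc p"]) auto
    qed
  next
    case False
    then have "k < occ r w" using Cons.prems by simp
    then obtain p where "p < length w" "w!p = r" "occ r (take p w) = k" using Cons.IH by blast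
    then show ?thesis using False by (intro exI[of _ "Suc p"]) auto
  qed
qed

lemma occ_unique:
  assumes "p < length w" "q < length w" "w!p = r" "w!q = r" "occ r (take p w) = occ r (take q w)"
  shows "p = q"
proof (rule ccontr)
  assume "p \<noteq> q"
  then consider "p < q" | "q < p" by linarith
  then show False
  proof cases
    case 1
    then have "occ r (take (Suc p) w) \<le> occ r (take q w)" by (intro occ_take_mono) simp
    then show False using occ_take_Suc[of p w r] assms by simp
  next
    case 2
    then have "occ r (take (Suc q) w) \<le> occ r (take p w)" by (intro occ_take_mono) simp
    then show False using occ_take_Suc[of q w r] assms by simp
  qed
qed

lemma length_occ: "set w \<subseteq> {1,2,3} \<Longrightarrow> length w = occ 1 w + occ 2 w + occ 3 w"
  by (induction w) auto

definition colP :: "nat \<Rightarrow> nat list \<Rightarrow> bool" where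
  "colP c w = (\<forall>k \<le> length w. min (occ 3 (take k w)) c \<le> occ 1 (take k w))"

definition VW0 :: "nat \<Rightarrow> nat \<Rightarrow> nat \<Rightarrow> nat list \<Rightarrow> bool" where
  "VW0 b c1 c2 w = (set w \<subseteq> {1,2,3} \<and> occ 1 w = c2 \<and> occ 2 w = b \<and> occ 3 w = c1)"

definition VW :: "nat \<Rightarrow> nat \<Rightarrow> nat \<Rightarrow> nat list \<Rightarrow> bool" where
  "VW b c1 c2 w = (VW0 b c1 c2 w \<and> colP (min c1 c2) w)"

definition swp :: "nat \<Rightarrow> nat list \<Rightarrow> nat list" where
  "swp p w = take p w @ [w!Suc p, w!p] @ drop (Suc (Suc p)) w"

definition MW :: "nat \<Rightarrow> nat \<Rightarrow> nat \<Rightarrow> nat list \<Rightarrow> bool" where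
  "MW b c1 c2 w = (VW b c1 c2 w \<and>
     \<not> (\<exists>p. Suc p < length w \<and> w!p < w!Suc p \<and> VW b c1 c2 (swp p w)))"

lemma decomp: "Suc p < length w \<Longrightarrow> w = take p w @ [w!p, w!Suc p] @ drop (Suc (Suc p)) w"
  by (metis Cons_nth_drop_Suc Suc_lessD append_Cons append_Nil append_take_drop_id)

lemma length_swp[simp]: "Suc p < length w \<Longrightarrow> length (swp p w) = length w"
  by (simp add: swp_def)

lemma nth_swp: "Suc p < length w \<Longrightarrow> q < length w \<Longrightarrow>
   swp p w ! q = (if q = p then w!Suc p else if q = Suc p then w!p else w!q)"
proof -
  assume a: "Suc p < length w" "q < length w"
  have L: "length (take p w) = p" using a by simp
  consider "q < p" | "q = p" | "q = Suc p" | "Suc p < q" by linarith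
  then show ?thesis
  proof cases
    case 1 then show ?thesis using a by (simp add: swp_def nth_append L)
  next
    case 2 then show ?thesis using a by (simp add: swp_def nth_append L)
  next
    case 3 then show ?thesis using a by (simp add: swp_def nth_append L)
  next
    case 4
    then have "swp p w ! q = drop (Suc (Suc p)) w ! (q - Suc (Suc p))"
      using a by (simp add: swp_def nth_append L min_def)
    also have "\<dots> = w ! q" using 4 a by (simp add: Suc_diff_Suc numeral_2_eq_2)
    finally show ?thesis using 4 by simp
  qed
qed

lemma swp_swp: "Suc p < length w \<Longrightarrow> swp p (swp p w) = w"
  by (rule nth_equalityI) (auto simp: nth_swp)

lemma occ_swp: "Suc p < length w \<Longrightarrow> occ r (swp p w) = occ r w"
  by (subst (2) decomp[of p w]) (auto simp: swp_def)

lemma set_swp: "Suc p < length w \<Longrightarrow> set (swp p w) = set w"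
  by (subst (2) decomp[of p w]) (auto simp: swp_def)

lemma VW0_swp: "Suc p < length w \<Longrightarrow> VW0 b c1 c2 (swp p w) = VW0 b c1 c2 w"
  by (simp add: VW0_def occ_swp set_swp)

lemma take_swp_le: "Suc p < length w \<Longrightarrow> k \<le> p \<Longrightarrow> take k (swp p w) = take k w"
  by (simp add: swp_def)

lemma take_swp_Suc: "Suc p < length w \<Longrightarrow> take (Suc p) (swp p w) = take p w @ [w!Suc p]"
  by (simp add: swp_def)

lemma occ_take_swp_ge: "Suc p < length w \<Longrightarrow> Suc (Suc p) \<le> k \<Longrightarrow> occ r (take k (swp p w)) = occ r (take k w)"
proof -
  assume a: "Suc p < length w" "Suc (Suc p) \<le> k"
  have "take k w = take k (take p w @ [w!p, w!Suc p] @ drop (Suc (Suc p)) w)"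
    using decomp[OF a(1)] by simp
  also have "\<dots> = take p w @ [w!p, w!Suc p] @ take (k - Suc (Suc p)) (drop (Suc (Suc p)) w)"
    using a by (simp add: min_def take_Cons')
  finally have 1: "take k w = \<dots>" .
  have "take k (swp p w) = take p w @ [w!Suc p, w!p] @ take (k - Suc (Suc p)) (drop (Suc (Suc p)) w)"
    using a by (simp add: swp_def min_def take_Cons')
  then show ?thesis using 1 by simp
qed

lemma colP_cons_other: "x \<noteq> 1 \<Longrightarrow> x \<noteq> 3 \<Longrightarrow> colP c (x#w) = colP c w"
proof
  assume a: "x \<noteq> 1" "x \<noteq> 3" "colP c (x#w)"
  show "colP c w" unfolding colP_def
  proof (intro allI impI)
    fix k assume "k \<le> length w"
    then have "min (occ 3 (take (Suc k) (x#w))) c \<le> occ 1 (take (Suc k) (x#w))"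
      using a(3) unfolding colP_def by (metis Suc_le_mono length_Cons)
    then show "min (occ 3 (take k w)) c \<le> occ 1 (take k w)" using a by simp
  qed
next
  assume a: "x \<noteq> 1" "x \<noteq> 3" "colP c w"
  show "colP c (x#w)" unfolding colP_def
  proof (intro allI impI)
    fix k assume k: "k \<le> length (x#w)"
    show "min (occ 3 (take k (x#w))) c \<le> occ 1 (take k (x#w))"
    proof (cases k)
      case 0 then show ?thesis by simp
    next
      case (Suc k')
      then have "min (occ 3 (take k' w)) c \<le> occ 1 (take k' w)"
        using a(3) k unfolding colP_def by simp
      then show ?thesis using a Suc by simp
    qed
  qed
qed

lemma colP_13: "0 < c \<Longrightarrow> colP c (1#3#w) = colP (c - 1) w"
proof
  assume a: "0 < c" "colP c (1#3#w)"
  show "colP (c-1) w" unfolding colP_def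
  proof (intro allI impI)
    fix k assume "k \<le> length w"
    then have "min (occ 3 (take (Suc (Suc k)) (1#3#w))) c \<le> occ 1 (take (Suc (Suc k)) (1#3#w))"
      using a(2) unfolding colP_def by (metis Suc_le_mono length_Cons)
    then show "min (occ 3 (take k w)) (c-1) \<le> occ 1 (take k w)" using a by simp
  qed
next
  assume a: "0 < c" "colP (c-1) w"
  show "colP c (1#3#w)" unfolding colP_def
  proof (intro allI impI)
    fix k assume k: "k \<le> length (1#3#w)"
    show "min (occ 3 (take k (1#3#w))) c \<le> occ 1 (take k (1#3#w))"
    proof (cases k)
      case 0 then show ?thesis by simp
    next
      case (Suc k1)
      show ?thesis
      proof (cases k1)
        case 0 then show ?thesis using Suc by simp
      next
        case (Suc k')
        then have "min (occ 3 (take k' w)) (c-1) \<le> occ 1 (take k' w)"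
          using a(2) k \<open>k = Suc k1\<close> unfolding colP_def by simp
        then show ?thesis using a Suc \<open>k = Suc k1\<close> by simp
      qed
    qed
  qed
qed

lemma colP_3: "0 < c \<Longrightarrow> \<not> colP c (3#w)"
  unfolding colP_def by (auto intro!: exI[of _ 1])

lemma colP_0: "colP 0 w"
  unfolding colP_def by simp

lemma colP_swp:
  assumes cp: "colP c w" and p: "Suc p < length w"
    and nt: "\<not> (w!p = 1 \<and> w!Suc p = 3 \<and> occ 1 (take p w) = occ 3 (take p w) \<and> occ 3 (take p w) < c)"
  shows "colP c (swp p w)"
  unfolding colP_def
proof (intro allI impI)
  fix k assume k: "k \<le> length (swp p w)"
  have cpk: "\<And>k. k \<le> length w \<Longrightarrow> min (occ 3 (take k w)) c \<le> occ 1 (take k w)"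
    using cp unfolding colP_def by blast
  consider "k \<le> p" | "k = Suc p" | "Suc (Suc p) \<le> k" by linarith
  then show "min (occ 3 (take k (swp p w))) c \<le> occ 1 (take k (swp p w))"
  proof cases
    case 1 then show ?thesis using take_swp_le[OF p 1] cpk[of k] p by simp
  next
    case 2
    have c0: "min (occ 3 (take p w)) c \<le> occ 1 (take p w)" using cpk[of p] p by simp
    have c1: "min (occ 3 (take (Suc p) w)) c \<le> occ 1 (take (Suc p) w)" using cpk[of "Suc p"] p by simp
    have c2: "min (occ 3 (take (Suc (Suc p)) w)) c \<le> occ 1 (take (Suc (Suc p)) w)" using cpk[of "Suc (Suc p)"] p by simp
    have t1: "occ r (take (Suc p) w) = occ r (take p w) + (if w!p = r then 1 else 0)" for r
      using occ_take_Suc[of p w r] p by simp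
    have t2: "occ r (take (Suc (Suc p)) w) = occ r (take (Suc p) w) + (if w!Suc p = r then 1 else 0)" for r
      using occ_take_Suc[of "Suc p" w r] p by simp
    have e: "take k (swp p w) = take p w @ [w!Suc p]" using take_swp_Suc[OF p] 2 by simp
    show ?thesis
    proof (cases "w!Suc p = 3")
      case False
      then show ?thesis using e c0 by auto
    next
      case True
      show ?thesis
      proof (cases "w!p = 1")
        case False
        then show ?thesis using e c2 t1[of 3] t1[of 1] t2[of 3] t2[of 1] True by auto
      next
        case w1: True
        then show ?thesis using e c0 True nt by auto
      qed
    qed
  next
    case 3 then show ?thesis using occ_take_swp_ge[OF p 3] cpk[of k] k p by simp
  qed
qed

lemma swp_Cons: "swp (Suc q) (x#w) = x # swp q w"
  by (simp add: swp_def)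

lemma VW0_2: "VW0 b c1 c2 (2#w) = (0 < b \<and> VW0 (b-1) c1 c2 w)"
  by (auto simp: VW0_def)

lemma VW0_13: "VW0 b c1 c2 (1#3#w) = (0 < c1 \<and> 0 < c2 \<and> VW0 b (c1-1) (c2-1) w)"
  by (auto simp: VW0_def)

lemma VW_2: "VW b c1 c2 (2#w) = (0 < b \<and> VW (b-1) c1 c2 w)"
  by (simp add: VW_def VW0_2 colP_cons_other)

lemma min_minus: "min (c1 - 1) (c2 - 1) = min c1 c2 - (1::nat)"
  by (simp add: min_def)

lemma VW_13: "0 < c1 \<Longrightarrow> 0 < c2 \<Longrightarrow> VW b c1 c2 (1#3#w) = VW b (c1-1) (c2-1) w"
proof -
  assume c: "0 < c1" "0 < c2"
  have "colP (min c1 c2) (1#3#w) = colP (min c1 c2 - 1) w" by (rule colP_13) (use c in simp)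
  then show ?thesis using c by (simp only: VW_def VW0_13 min_minus) simp
qed

lemma VW_set: "VW b c1 c2 w \<Longrightarrow> x \<in> set w \<Longrightarrow> x = 1 \<or> x = 2 \<or> x = 3"
  by (auto simp: VW_def VW0_def)

lemma VW_length: "VW b c1 c2 w \<Longrightarrow> length w = b + c1 + c2"
  using length_occ[of w] by (auto simp: VW_def VW0_def)

lemma MW_2I:
  assumes m: "MW (b-1) c1 c2 w" and b: "0 < b" and c: "0 < min c1 c2"
  shows "MW b c1 c2 (2#w)"
proof -
  have vw: "VW (b-1) c1 c2 w" using m by (simp add: MW_def)
  have "VW b c1 c2 (2#w)" using vw b by (simp add: VW_2)
  moreover have "\<not> (Suc p < length (2#w) \<and> (2#w)!p < (2#w)!Suc p \<and> VW b c1 c2 (swp p (2#w)))" for p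
  proof
    assume h: "Suc p < length (2#w) \<and> (2#w)!p < (2#w)!Suc p \<and> VW b c1 c2 (swp p (2#w))"
    show False
    proof (cases p)
      case 0
      then have "w!0 > 2" "w \<noteq> []" using h by auto
      moreover have "w!0 \<in> set w" using \<open>w \<noteq> []\<close> by simp
      ultimately have "w!0 = 3" using VW_set[OF vw] by fastforce
      then have "w = 3 # tl w" using \<open>w \<noteq> []\<close> by (metis hd_Cons_tl hd_conv_nth)
      then show False using vw c colP_3 unfolding VW_def by metis
    next
      case (Suc q)
      then show False using h m b by (auto simp: MW_def swp_Cons VW_2)
    qed
  qed
  ultimately show ?thesis unfolding MW_def by blast
qed

lemma MW_13I:
  assumes m: "MW b (c1-1) (c2-1) w" and c: "0 < c1" "0 < c2"
  shows "MW b c1 c2 (1#3#w)"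
proof -
  have vw: "VW b (c1-1) (c2-1) w" using m by (simp add: MW_def)
  have "VW b c1 c2 (1#3#w)" using vw c VW_13 by blast
  moreover have "\<not> (Suc p < length (1#3#w) \<and> (1#3#w)!p < (1#3#w)!Suc p \<and> VW b c1 c2 (swp p (1#3#w)))" for p
  proof
    assume h: "Suc p < length (1#3#w) \<and> (1#3#w)!p < (1#3#w)!Suc p \<and> VW b c1 c2 (swp p (1#3#w))"
    show False
    proof (cases p)
      case 0
      then have "swp p (1#3#w) = 3 # 1 # w" by (simp add: swp_def)
      then show False using h c colP_3[of "min c1 c2" "1#w"] unfolding VW_def by simp
    next
      case (Suc q)
      show False
      proof (cases q)
        case 0
        then have "w!0 > 3" "w \<noteq> []" using h Suc by auto
        moreover have "w!0 \<in> set w" using \<open>w \<noteq> []\<close> by simp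
        ultimately show False using VW_set[OF vw] by fastforce
      next
        case (Suc q')
        have e: "swp p (1#3#w) = 1#3#swp q' w" using Suc \<open>p = Suc q\<close> by (simp add: swp_Cons)
        have "VW b (c1-1) (c2-1) (swp q' w)" using h e VW_13[OF c, where w="swp q' w"] by simp
        moreover have "Suc q' < length w" "w!q' < w!Suc q'" using h Suc \<open>p = Suc q\<close> by auto
        ultimately show False using m unfolding MW_def by blast
      qed
    qed
  qed
  ultimately show ?thesis unfolding MW_def by blast
qed

lemma MW_cases:
  assumes m: "MW b c1 c2 w" and c: "0 < min c1 c2"
  shows "(\<exists>w'. w = 2#w' \<and> 0 < b \<and> MW (b-1) c1 c2 w') \<or> (\<exists>w'. w = 1#3#w' \<and> MW b (c1-1) (c2-1) w')"
proof -
  have vw: "VW b c1 c2 w" and mn: "\<And>p. Suc p < length w \<Longrightarrow> w!p < w!Suc p \<Longrightarrow> \<not> VW b c1 c2 (swp p w)"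
    using m unfolding MW_def by auto
  have c12: "0 < c1" "0 < c2" using c by auto
  have len: "length w = b + c1 + c2" using VW_length[OF vw] .
  then obtain x w1 where w: "w = x # w1" using c12 by (cases w) auto
  have x: "x = 1 \<or> x = 2 \<or> x = 3" using VW_set[OF vw, of x] w by simp
  have cp: "colP (min c1 c2) w" using vw by (simp add: VW_def)
  have v0: "VW0 b c1 c2 w" using vw by (simp add: VW_def)
  consider "x = 1" | "x = 2" | "x = 3" using x by blast
  then show ?thesis
  proof cases
    case 3
    then show ?thesis using cp c colP_3 w by blast
  next
    case 2
    have vw1: "VW (b-1) c1 c2 w1" and b: "0 < b" using vw w 2 VW_2 by auto
    have "MW (b-1) c1 c2 w1" unfolding MW_def
    proof (intro conjI vw1 notI)
      assume "\<exists>p. Suc p < length w1 \<and> w1 ! p < w1 ! Suc p \<and> VW (b - 1) c1 c2 (swp p w1)"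
      then obtain p where p: "Suc p < length w1" "w1 ! p < w1 ! Suc p" "VW (b - 1) c1 c2 (swp p w1)" by blast
      have "VW b c1 c2 (swp (Suc p) w)" using p(3) b w 2 VW_2 swp_Cons by simp
      then show False using mn[of "Suc p"] p w by simp
    qed
    then show ?thesis using w 2 b by blast
  next
    case 1
    obtain y w2 where w1: "w1 = y # w2" using len w c12 by (cases w1) auto
    have y: "y = 1 \<or> y = 2 \<or> y = 3" using VW_set[OF vw, of y] w w1 by simp
    consider "y = 1" | "y = 2" | "y = 3" using y by blast
    then show ?thesis
    proof cases
      case 2
      have "VW b c1 c2 (swp 0 w)"
        unfolding VW_def
      proof
        show "VW0 b c1 c2 (swp 0 w)" using v0 VW0_swp[of 0 w] w w1 by simp
        show "colP (min c1 c2) (swp 0 w)" using colP_swp[OF cp, of 0] w w1 2 by simp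
      qed
      then show ?thesis using mn[of 0] w w1 1 2 by simp
    next
      case y3: 3
      have "VW b (c1-1) (c2-1) w2" using vw w w1 1 y3 VW_13[OF c12, where w=w2] by simp
      moreover have "\<not> (\<exists>p. Suc p < length w2 \<and> w2 ! p < w2 ! Suc p \<and> VW b (c1-1) (c2-1) (swp p w2))"
      proof
        assume "\<exists>p. Suc p < length w2 \<and> w2 ! p < w2 ! Suc p \<and> VW b (c1-1) (c2-1) (swp p w2)"
        then obtain p where p: "Suc p < length w2" "w2 ! p < w2 ! Suc p" "VW b (c1-1) (c2-1) (swp p w2)" by blast
        have e: "swp (Suc (Suc p)) w = 1 # 3 # swp p w2" using w w1 1 y3 by (simp add: swp_Cons)
        have "VW b c1 c2 (swp (Suc (Suc p)) w)" using p(3) e VW_13[OF c12, where w="swp p w2"] by simp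
        then show False using mn[of "Suc (Suc p)"] p w w1 by simp
      qed
      ultimately have "MW b (c1-1) (c2-1) w2" unfolding MW_def by blast
      then show ?thesis using w w1 1 y3 by blast
    next
      case y1: 1
      have "0 < occ 3 w" using v0 c12 by (simp add: VW0_def)
      then obtain q where q: "q < length w" "w!q = 3" "occ 3 (take q w) = 0" using occ_exists[of 0 3 w] by blast
      have "q \<noteq> 0"
      proof
        assume "q = 0" then show False using q w w1 1 y1 by simp
      qed
      moreover have "q \<noteq> 1"
      proof
        assume "q = 1" then show False using q w w1 1 y1 by simp
      qed
      ultimately obtain p where qp: "q = Suc p" and p1: "1 \<le> p" by (cases q) auto
      have a3: "occ 3 (take p w) = 0" using occ_take_mono[of p q 3 w] q qp by simp
      have "occ 3 (take (Suc p) w) = 0" using q qp by simp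
      then have wp: "w!p \<noteq> 3" using occ_take_Suc[of p w 3] q qp by (auto split: if_splits)
      have wp': "w!p = 1 \<or> w!p = 2 \<or> w!p = 3" using VW_set[OF vw, of "w!p"] q qp by simp
      have "occ 1 (take 1 w) = 1" using w 1 by simp
      then have a1: "1 \<le> occ 1 (take p w)" using occ_take_mono[of 1 p 1 w] p1 by simp
      have "VW b c1 c2 (swp p w)"
        unfolding VW_def
      proof
        show "VW0 b c1 c2 (swp p w)" using v0 VW0_swp[of p w] q qp by simp
        show "colP (min c1 c2) (swp p w)" using colP_swp[OF cp, of p] q qp a3 a1 by simp
      qed
      moreover have "w!p < w!Suc p" using wp wp' q qp by auto
      ultimately show ?thesis using mn[of p] q qp by simp
    qed
  qed
qed

lemma sorted_desc_form:
  "sorted_wrt (\<ge>) w \<Longrightarrow> set w \<subseteq> {1,2,3::nat} \<Longrightarrow>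
    w = replicate (occ 3 w) 3 @ replicate (occ 2 w) 2 @ replicate (occ 1 w) 1"
proof (induction w)
  case Nil then show ?case by simp
next
  case (Cons x w)
  then have IH: "w = replicate (occ 3 w) 3 @ replicate (occ 2 w) 2 @ replicate (occ 1 w) 1" by simp
  have xs: "\<forall>y\<in>set w. y \<le> x" using Cons.prems by simp
  consider "x = 1" | "x = 2" | "x = 3" using Cons.prems by auto
  then show ?case
  proof cases
    case 1
    then have "occ 3 w = 0" "occ 2 w = 0" using xs by (auto simp: occ_def filter_empty_conv)
    then show ?thesis using IH 1 by simp
  next
    case 2
    then have "occ 3 w = 0" using xs by (auto simp: occ_def filter_empty_conv)
    then show ?thesis using IH 2 by simp
  next
    case 3
    then show ?thesis using IH by simp
  qed
qed

lemma sorted_wrt_ge_replicate[simp]: "sorted_wrt (\<ge>) (replicate n (x::nat))"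
  by (induction n) auto

definition wdec :: "nat \<Rightarrow> nat \<Rightarrow> nat \<Rightarrow> nat list" where
  "wdec b c1 c2 = replicate c1 3 @ replicate b 2 @ replicate c2 1"

lemma MW_zero:
  assumes c: "min c1 c2 = 0"
  shows "{w. MW b c1 c2 w} = {wdec b c1 c2}"
proof
  show "{w. MW b c1 c2 w} \<subseteq> {wdec b c1 c2}"
  proof
    fix w assume "w \<in> {w. MW b c1 c2 w}"
    then have m: "MW b c1 c2 w" by simp
    have vw: "VW b c1 c2 w" and mn: "\<And>p. Suc p < length w \<Longrightarrow> w!p < w!Suc p \<Longrightarrow> \<not> VW b c1 c2 (swp p w)"
      using m unfolding MW_def by auto
    have v0: "VW0 b c1 c2 w" using vw by (simp add: VW_def)
    have "w!p \<ge> w!Suc p" if "Suc p < length w" for p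
    proof (rule ccontr)
      assume "\<not> w!p \<ge> w!Suc p"
      moreover have "VW b c1 c2 (swp p w)" unfolding VW_def using c colP_0 VW0_swp[OF that] v0 by simp
      ultimately show False using mn[OF that] by simp
    qed
    then have "sorted_wrt (\<ge>) w" by (simp add: sorted_wrt_iff_nth_Suc_transp transp_def)
    moreover have "set w \<subseteq> {1,2,3}" using v0 by (simp add: VW0_def)
    ultimately have "w = replicate (occ 3 w) 3 @ replicate (occ 2 w) 2 @ replicate (occ 1 w) 1"
      by (rule sorted_desc_form)
    then show "w \<in> {wdec b c1 c2}" using v0 by (simp add: VW0_def wdec_def)
  qed
next
  have sd: "sorted_wrt (\<ge>) (wdec b c1 c2)" by (auto simp: wdec_def sorted_wrt_append set_replicate_conv_if)
  have "VW b c1 c2 (wdec b c1 c2)" using c colP_0 by (auto simp: VW_def VW0_def wdec_def)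
  moreover have "\<not> (wdec b c1 c2)!p < (wdec b c1 c2)!Suc p" if "Suc p < length (wdec b c1 c2)" for p
    using sorted_wrt_nth_less[OF sd, of p "Suc p"] that by simp
  ultimately show "{wdec b c1 c2} \<subseteq> {w. MW b c1 c2 w}" by (auto simp: MW_def)
qed

lemma finite_MW: "finite {w. MW b c1 c2 w}"
proof (rule finite_subset)
  show "{w. MW b c1 c2 w} \<subseteq> {w. set w \<subseteq> {1,2,3} \<and> length w = b + c1 + c2}"
    using VW_length by (auto simp: MW_def VW_def VW0_def)
  show "finite {w. set w \<subseteq> {1,2,3::nat} \<and> length w = b + c1 + c2}"
    by (rule finite_lists_length_eq) simp
qed

lemma MW_set_pos:
  assumes c: "0 < min c1 c2" and b: "0 < b"
  shows "{w. MW b c1 c2 w} = Cons 2 ` {w. MW (b-1) c1 c2 w} \<union> (\<lambda>w. 1#3#w) ` {w. MW b (c1-1) (c2-1) w}"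
proof
  show "{w. MW b c1 c2 w} \<subseteq> Cons 2 ` {w. MW (b-1) c1 c2 w} \<union> (\<lambda>w. 1#3#w) ` {w. MW b (c1-1) (c2-1) w}"
  proof
    fix w assume "w \<in> {w. MW b c1 c2 w}"
    then have "(\<exists>w'. w = 2#w' \<and> 0 < b \<and> MW (b-1) c1 c2 w') \<or> (\<exists>w'. w = 1#3#w' \<and> MW b (c1-1) (c2-1) w')"
      using MW_cases[OF _ c] by simp
    then show "w \<in> Cons 2 ` {w. MW (b-1) c1 c2 w} \<union> (\<lambda>w. 1#3#w) ` {w. MW b (c1-1) (c2-1) w}"
      by blast
  qed
  show "Cons 2 ` {w. MW (b-1) c1 c2 w} \<union> (\<lambda>w. 1#3#w) ` {w. MW b (c1-1) (c2-1) w} \<subseteq> {w. MW b c1 c2 w}"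
    using MW_2I[OF _ b c] MW_13I[of b c1 c2] c by auto
qed

lemma MW_set_b0:
  assumes c: "0 < min c1 c2"
  shows "{w. MW 0 c1 c2 w} = (\<lambda>w. 1#3#w) ` {w. MW 0 (c1-1) (c2-1) w}"
  using MW_cases[OF _ c, of 0] MW_13I[of 0 c1 c2] c by auto

lemma card_MW: "card {w. MW b c1 c2 w} = (b + min c1 c2) choose b"
proof (induction "b + c1" arbitrary: b c1 c2 rule: less_induct)
  case less
  show ?case
  proof (cases "min c1 c2 = 0")
    case True then show ?thesis using MW_zero[OF True] by simp
  next
    case False
    then have c: "0 < min c1 c2" by simp
    show ?thesis
    proof (cases "b = 0")
      case True
      have "card {w. MW b c1 c2 w} = card {w. MW 0 (c1-1) (c2-1) w}"
        using MW_set_b0[OF c] True by (simp add: card_image inj_on_def)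
      also have "\<dots> = 1" using less[of 0 "c1 - 1" "c2 - 1"] c True by simp
      finally show ?thesis using True by simp
    next
      case False
      have d: "Cons 2 ` {w. MW (b-1) c1 c2 w} \<inter> (\<lambda>w. 1#3#w) ` {w. MW b (c1-1) (c2-1) w} = {}" by auto
      have "card {w. MW b c1 c2 w} = card (Cons 2 ` {w. MW (b-1) c1 c2 w}) + card ((\<lambda>w. 1#3#w) ` {w. MW b (c1-1) (c2-1) w})"
        using MW_set_pos[OF c] False d finite_MW by (simp add: card_Un_disjoint)
      also have "\<dots> = card {w. MW (b-1) c1 c2 w} + card {w. MW b (c1-1) (c2-1) w}"
        by (simp add: card_image inj_on_def)
      also have "\<dots> = (((b - 1) + min c1 c2) choose (b-1)) + ((b + min (c1-1) (c2-1)) choose b)"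
        using less[of "b-1" c1 c2] less[of b "c1-1" "c2-1"] False c by simp
      also have "\<dots> = (b + min c1 c2) choose b"
      proof -
        obtain b' where b': "b = Suc b'" using False by (cases b) auto
        obtain m where m: "min c1 c2 = Suc m" using c by (cases "min c1 c2") auto
        have "min (c1-1) (c2-1) = m" using m by (simp add: min_def split: if_splits; linarith)
        then show ?thesis using b' m by simp
      qed
      finally show ?thesis .
    qed
  qed
qed

context fixes b c1 c2 :: nat begin

abbreviation "al \<equiv> lobster_alpha b c1 c2"
abbreviation "be \<equiv> lobster_beta b"
abbreviation "cells \<equiv> skew_cells al be"
abbreviation "NN \<equiv> skew_size al be"

definition bs :: "nat \<Rightarrow> nat" where "bs r = (if r = 2 then 1 else b + 1)"
definition ln :: "nat \<Rightarrow> nat" where "ln r = (if r = 1 then c2 else if r = 2 then b else c1)"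

lemma cells_iff: "x \<in> cells \<longleftrightarrow> (fst x = 1 \<or> fst x = 2 \<or> fst x = 3) \<and> bs (fst x) < snd x \<and> snd x \<le> bs (fst x) + ln (fst x)"
proof (cases x)
  case (Pair r col)
  have "r \<ge> 1 \<and> r \<le> 3 \<longleftrightarrow> r = 1 \<or> r = 2 \<or> r = 3" by auto
  then show ?thesis using Pair
    by (auto simp: skew_cells_def lobster_alpha_def lobster_beta_def bs_def ln_def)
qed

lemma cells_Pair: "(r, col) \<in> cells \<longleftrightarrow> (r = 1 \<or> r = 2 \<or> r = 3) \<and> bs r < col \<and> col \<le> bs r + ln r"
  using cells_iff[of "(r,col)"] by simp

lemma card_row:
  assumes "r = 1 \<or> r = 2 \<or> r = 3"
  shows "card {y\<in>cells. fst y = r \<and> P (snd y)} = card {j. bs r < j \<and> j \<le> bs r + ln r \<and> P j}"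
proof -
  have "{y\<in>cells. fst y = r \<and> P (snd y)} = Pair r ` {j. bs r < j \<and> j \<le> bs r + ln r \<and> P j}"
    using assms by (auto simp: cells_iff)
  then show ?thesis by (simp add: card_image inj_on_def)
qed

lemma card_Ioc_filter: "card {j. a < j \<and> j \<le> a + l \<and> j < m} = min l (m - a - 1)"
proof -
  have "{j. a < j \<and> j \<le> a + l \<and> j < m} = {a<..min (a+l) (m - 1)}" by auto
  then show ?thesis by simp
qed

lemma card_Ioc_filter2: "card {j. a < j \<and> j \<le> a + l \<and> j \<le> m} = min l (m - a)"
proof -
  have "{j. a < j \<and> j \<le> a + l \<and> j \<le> m} = {a<..min (a+l) m}" by auto
  then show ?thesis by simp
qed

lemma card_Ioc_all: "card {j. a < j \<and> j \<le> a + l} = (l::nat)"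
proof -
  have "{j. a < j \<and> j \<le> a + l} = {a<..a+l}" by auto
  then show ?thesis by simp
qed

lemma card_row_all: "r = 1 \<or> r = 2 \<or> r = 3 \<Longrightarrow> card {y\<in>cells. fst y = r} = ln r"
  using card_row[of r "\<lambda>_. True"] card_Ioc_all by simp

lemma finite_cells: "finite cells"
proof (rule finite_subset)
  show "cells \<subseteq> {1..3} \<times> {0..b + 1 + c1 + c2}"
    by (auto simp: cells_iff bs_def ln_def split: if_splits)
qed simp

lemma NN_eq: "NN = b + c1 + c2"
proof -
  have "cells = {y\<in>cells. fst y = 1} \<union> {y\<in>cells. fst y = 2} \<union> {y\<in>cells. fst y = 3}"
    by (auto simp: cells_iff)
  moreover have "card ({y\<in>cells. fst y = 1} \<union> {y\<in>cells. fst y = 2} \<union> {y\<in>cells. fst y = 3})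
     = card {y\<in>cells. fst y = 1} + card {y\<in>cells. fst y = 2} + card {y\<in>cells. fst y = 3}"
    by (subst card_Un_disjoint, use finite_cells in auto)+
  ultimately have "card cells = card {y\<in>cells. fst y = 1} + card {y\<in>cells. fst y = 2} + card {y\<in>cells. fst y = 3}"
    by simp
  then show ?thesis using card_row_all[of 1] card_row_all[of 2] card_row_all[of 3]
    by (simp add: skew_size_def ln_def)
qed

lemma SET_D:
  assumes "T \<in> SET al be"
  shows "\<And>x. x \<notin> cells \<Longrightarrow> T x = 0"
    and "bij_betw T cells {1..NN}"
    and "\<And>x y. x \<in> cells \<Longrightarrow> y \<in> cells \<Longrightarrow> fst x = fst y \<Longrightarrow> snd x < snd y \<Longrightarrow> T x < T y"
    and "\<And>x y. x \<in> cells \<Longrightarrow> y \<in> cells \<Longrightarrow> snd x = snd y \<Longrightarrow> fst x < fst y \<Longrightarrow> T x < T y"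
  using assms unfolding SET_def by auto

lemma SET_I:
  assumes "\<And>x. x \<notin> cells \<Longrightarrow> T x = 0"
    and "bij_betw T cells {1..NN}"
    and "\<And>x y. x \<in> cells \<Longrightarrow> y \<in> cells \<Longrightarrow> fst x = fst y \<Longrightarrow> snd x < snd y \<Longrightarrow> T x < T y"
    and "\<And>x y. x \<in> cells \<Longrightarrow> y \<in> cells \<Longrightarrow> snd x = snd y \<Longrightarrow> fst x < fst y \<Longrightarrow> T x < T y"
  shows "T \<in> SET al be"
  using assms unfolding SET_def by auto

lemma row_of_val: "inj_on T cells \<Longrightarrow> x \<in> cells \<Longrightarrow> row_of al be T (T x) = fst x"
  unfolding row_of_def
  by (rule arg_cong[where f=fst], rule the_equality) (auto dest: inj_onD)

definition rw :: "((nat \<times> nat) \<Rightarrow> nat) \<Rightarrow> nat list" where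
  "rw T = map (row_of al be T) [1..<Suc NN]"

lemma length_rw[simp]: "length (rw T) = NN"
  by (simp add: rw_def)

lemma nth_rw: "q < NN \<Longrightarrow> rw T ! q = row_of al be T (Suc q)"
  by (simp add: rw_def del: upt_Suc)

lemma occ_map_upt: "occ r (map f [a..<c]) = card {v. a \<le> v \<and> v < c \<and> f v = r}"
proof -
  have "occ r (map f [a..<c]) = length (filter (\<lambda>v. f v = r) [a..<c])"
    by (simp add: occ_def filter_map comp_def)
  also have "\<dots> = card (set (filter (\<lambda>v. f v = r) [a..<c]))"
    by (rule distinct_card[symmetric]) simp
  also have "set (filter (\<lambda>v. f v = r) [a..<c]) = {v. a \<le> v \<and> v < c \<and> f v = r}" by auto
  finally show ?thesis .
qed

lemma occ_take_rw:
  assumes T: "T \<in> SET al be" and m: "m \<le> NN"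
  shows "occ r (take m (rw T)) = card {y\<in>cells. fst y = r \<and> T y \<le> m}"
proof -
  have bij: "bij_betw T cells {1..NN}" using SET_D[OF T] by blast
  have inj: "inj_on T cells" using bij by (simp add: bij_betw_def)
  have "take m (rw T) = map (row_of al be T) [1..<Suc m]"
    using m by (simp add: rw_def take_map take_upt del: upt_Suc)
  then have "occ r (take m (rw T)) = card {v. 1 \<le> v \<and> v < Suc m \<and> row_of al be T v = r}"
    by (simp add: occ_map_upt del: upt_Suc)
  also have "{v. 1 \<le> v \<and> v < Suc m \<and> row_of al be T v = r} = T ` {y\<in>cells. fst y = r \<and> T y \<le> m}"
  proof
    show "{v. 1 \<le> v \<and> v < Suc m \<and> row_of al be T v = r} \<subseteq> T ` {y\<in>cells. fst y = r \<and> T y \<le> m}"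
    proof
      fix v assume v: "v \<in> {v. 1 \<le> v \<and> v < Suc m \<and> row_of al be T v = r}"
      then have "v \<in> {1..NN}" using m by auto
      then obtain y where y: "y \<in> cells" "T y = v" using bij by (metis bij_betw_def imageE)
      then show "v \<in> T ` {y\<in>cells. fst y = r \<and> T y \<le> m}"
        using v row_of_val[OF inj y(1)] by auto
    qed
    show "T ` {y\<in>cells. fst y = r \<and> T y \<le> m} \<subseteq> {v. 1 \<le> v \<and> v < Suc m \<and> row_of al be T v = r}"
    proof
      fix v assume "v \<in> T ` {y\<in>cells. fst y = r \<and> T y \<le> m}"
      then obtain y where y: "y \<in> cells" "fst y = r" "T y \<le> m" "v = T y" by auto
      have "T y \<in> {1..NN}" using bij y(1) by (metis bij_betw_def imageI)
      then show "v \<in> {v. 1 \<le> v \<and> v < Suc m \<and> row_of al be T v = r}"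
        using y row_of_val[OF inj y(1)] by auto
    qed
  qed
  also have "card (T ` {y\<in>cells. fst y = r \<and> T y \<le> m}) = card {y\<in>cells. fst y = r \<and> T y \<le> m}"
    by (rule card_image) (rule inj_on_subset[OF inj], auto)
  finally show ?thesis .
qed

lemma SET_val:
  assumes T: "T \<in> SET al be" and x: "x \<in> cells"
  shows "1 \<le> T x" "T x \<le> NN"
  using SET_D(2)[OF T] x by (auto simp: bij_betw_def)

lemma SET_surj:
  assumes T: "T \<in> SET al be" and v: "1 \<le> v" "v \<le> NN"
  obtains y where "y \<in> cells" "T y = v"
  using SET_D(2)[OF T] v by (metis atLeastAtMost_iff bij_betw_def imageE)

lemma key_occ:
  assumes T: "T \<in> SET al be" and x: "x \<in> cells"
  shows "occ (fst x) (take (T x - 1) (rw T)) = snd x - bs (fst x) - 1"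
proof -
  have inj: "inj_on T cells" using SET_D(2)[OF T] by (simp add: bij_betw_def)
  have r: "fst x = 1 \<or> fst x = 2 \<or> fst x = 3" using x by (simp add: cells_iff)
  have "occ (fst x) (take (T x - 1) (rw T)) = card {y\<in>cells. fst y = fst x \<and> T y \<le> T x - 1}"
    using occ_take_rw[OF T] SET_val[OF T x] by simp
  also have "{y\<in>cells. fst y = fst x \<and> T y \<le> T x - 1} = {y\<in>cells. fst y = fst x \<and> snd y < snd x}"
  proof (intro Collect_cong conj_cong refl)
    fix y assume y: "y \<in> cells" "fst y = fst x"
    show "T y \<le> T x - 1 \<longleftrightarrow> snd y < snd x"
    proof
      assume a: "T y \<le> T x - 1"
      show "snd y < snd x"
      proof (rule ccontr)
        assume "\<not> snd y < snd x"
        then consider "snd y = snd x" | "snd x < snd y" by linarith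
        then show False
        proof cases
          case 1 then have "y = x" using y by (simp add: prod_eq_iff)
          then show False using a SET_val[OF T x] by simp
        next
          case 2 then have "T x < T y" using SET_D(3)[OF T x y(1)] y by simp
          then show False using a by simp
        qed
      qed
    next
      assume "snd y < snd x"
      then have "T y < T x" using SET_D(3)[OF T y(1) x] y by simp
      then show "T y \<le> T x - 1" by simp
    qed
  qed
  also have "card {y\<in>cells. fst y = fst x \<and> snd y < snd x} = min (ln (fst x)) (snd x - bs (fst x) - 1)"
    using card_row[OF r, of "\<lambda>j. j < snd x"] card_Ioc_filter by simp
  also have "\<dots> = snd x - bs (fst x) - 1" using x unfolding cells_iff by linarith
  finally show ?thesis .
qed

definition Pp :: "nat list \<Rightarrow> nat \<times> nat \<Rightarrow> nat \<Rightarrow> bool" where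
  "Pp w x p = (p < length w \<and> w!p = fst x \<and> occ (fst x) (take p w) = snd x - bs (fst x) - 1)"

definition tab :: "nat list \<Rightarrow> (nat \<times> nat) \<Rightarrow> nat" where
  "tab w x = (if x \<in> cells then Suc (THE p. Pp w x p) else 0)"

lemma Pp_unique: "Pp w x p \<Longrightarrow> Pp w x q \<Longrightarrow> p = q"
  unfolding Pp_def using occ_unique by metis

lemma tab_eq: "x \<in> cells \<Longrightarrow> Pp w x p \<Longrightarrow> tab w x = Suc p"
  unfolding tab_def using Pp_unique by (simp add: the_equality)

lemma tab_rw:
  assumes T: "T \<in> SET al be"
  shows "tab (rw T) = T"
proof
  fix x
  show "tab (rw T) x = T x"
  proof (cases "x \<in> cells")
    case False then show ?thesis using SET_D(1)[OF T] by (simp add: tab_def)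
  next
    case True
    have inj: "inj_on T cells" using SET_D(2)[OF T] by (simp add: bij_betw_def)
    have "Pp (rw T) x (T x - 1)"
      unfolding Pp_def
    proof (intro conjI)
      show "T x - 1 < length (rw T)" using SET_val[OF T True] by simp
      show "rw T ! (T x - 1) = fst x"
        using SET_val[OF T True] nth_rw row_of_val[OF inj True] by simp
      show "occ (fst x) (take (T x - 1) (rw T)) = snd x - bs (fst x) - 1" by (rule key_occ[OF T True])
    qed
    then show ?thesis using tab_eq[OF True] SET_val[OF T True] by simp
  qed
qed

lemma rw_inj: "T \<in> SET al be \<Longrightarrow> U \<in> SET al be \<Longrightarrow> rw T = rw U \<Longrightarrow> T = U"
  using tab_rw by metis



lemma rw_VW:
  assumes T: "T \<in> SET al be"
  shows "VW b c1 c2 (rw T)"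
proof -
  have inj: "inj_on T cells" using SET_D(2)[OF T] by (simp add: bij_betw_def)
  let ?w = "rw T"
  have set: "set ?w \<subseteq> {1,2,3}"
  proof
    fix z assume "z \<in> set ?w"
    then obtain q where q: "q < NN" "?w ! q = z" by (auto simp: in_set_conv_nth)
    obtain y where y: "y \<in> cells" "T y = Suc q" using SET_surj[OF T, of "Suc q"] q by auto
    have "z = fst y" using q nth_rw row_of_val[OF inj y(1)] y by simp
    then show "z \<in> {1,2,3}" using y by (auto simp: cells_iff)
  qed
  have cnt: "occ r ?w = ln r" if r: "r = 1 \<or> r = 2 \<or> r = 3" for r
  proof -
    have "occ r ?w = occ r (take NN ?w)" by simp
    also have "\<dots> = card {y\<in>cells. fst y = r \<and> T y \<le> NN}" by (rule occ_take_rw[OF T]) simp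
    also have "{y\<in>cells. fst y = r \<and> T y \<le> NN} = {y\<in>cells. fst y = r}" using SET_val[OF T] by auto
    finally show ?thesis using card_row_all[OF r] by simp
  qed
  have cp: "colP (min c1 c2) ?w" unfolding colP_def
  proof (intro allI impI)
    fix k assume k: "k \<le> length ?w"
    let ?c = "min c1 c2"
    define A where "A = {y\<in>cells. fst y = 3 \<and> T y \<le> k}"
    define D where "D = {y\<in>cells. fst y = 1 \<and> T y \<le> k}"
    define A' where "A' = {y\<in>A. snd y \<le> b + 1 + ?c}"
    have a: "occ 3 (take k ?w) = card A" unfolding A_def by (rule occ_take_rw[OF T]) (use k in simp)
    have d: "occ 1 (take k ?w) = card D" unfolding D_def by (rule occ_take_rw[OF T]) (use k in simp)
    have fA: "finite A" unfolding A_def using finite_cells by simp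
    have fD: "finite D" unfolding D_def using finite_cells by simp
    have "card A' \<le> card D"
    proof (rule card_inj_on_le[where f="\<lambda>y. (1::nat, snd y)"])
      show "inj_on (\<lambda>y. (1::nat, snd y)) A'" unfolding A'_def A_def by (auto simp: inj_on_def prod_eq_iff)
      show "finite D" by (rule fD)
      show "(\<lambda>y. (1::nat, snd y)) ` A' \<subseteq> D"
      proof
        fix z assume "z \<in> (\<lambda>y. (1::nat, snd y)) ` A'"
        then obtain y where y: "y \<in> A'" "z = (1, snd y)" by auto
        have yc: "y \<in> cells" "fst y = 3" "T y \<le> k" "snd y \<le> b + 1 + ?c" using y(1) unfolding A'_def A_def by auto
        have zc: "z \<in> cells" using yc y(2) by (auto simp: cells_iff bs_def ln_def)
        have "T z < T y" using SET_D(4)[OF T zc yc(1)] yc y(2) by simp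
        then show "z \<in> D" using zc yc y(2) unfolding D_def by simp
      qed
    qed
    moreover have "min (card A) ?c \<le> card A'"
    proof (cases "A \<subseteq> {y. snd y \<le> b + 1 + ?c}")
      case True
      then have "A' = A" unfolding A'_def by auto
      then show ?thesis by simp
    next
      case False
      then obtain y0 where y0: "y0 \<in> A" "\<not> snd y0 \<le> b + 1 + ?c" by blast
      have "A' = {y\<in>cells. fst y = 3 \<and> snd y \<le> b + 1 + ?c}"
      proof (rule set_eqI, rule iffI)
        fix y assume "y \<in> A'" then show "y \<in> {y\<in>cells. fst y = 3 \<and> snd y \<le> b + 1 + ?c}"
          by (simp add: A'_def A_def)
      next
        fix y assume "y \<in> {y\<in>cells. fst y = 3 \<and> snd y \<le> b + 1 + ?c}"
        then have y: "y \<in> cells" "fst y = 3" "snd y \<le> b + 1 + ?c" by auto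
        have "T y < T y0" using SET_D(3)[OF T y(1), of y0] y y0 unfolding A_def by auto
        then have "T y \<le> k" using y0 unfolding A_def by simp
        then show "y \<in> A'" using y by (simp add: A'_def A_def)
      qed
      then have "card A' = card {j. bs 3 < j \<and> j \<le> bs 3 + ln 3 \<and> j \<le> b + 1 + ?c}"
        using card_row[of 3 "\<lambda>j. j \<le> b + 1 + ?c"] by simp
      also have "\<dots> = ?c" using card_Ioc_filter2[of "Suc b" c1 "Suc (b + min c1 c2)"] by (simp add: bs_def ln_def)
      finally show ?thesis by (metis min.cobounded2)
    qed
    ultimately show "min (occ 3 (take k ?w)) ?c \<le> occ 1 (take k ?w)" using a d by simp
  qed
  show ?thesis unfolding VW_def VW0_def
    using set cnt[of 1] cnt[of 2] cnt[of 3] cp by (simp add: ln_def)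
qed

lemma VW0_length: "VW0 b c1 c2 w \<Longrightarrow> length w = NN"
  using length_occ[of w] NN_eq by (auto simp: VW0_def)

lemma VW0_Pp_ex:
  assumes w: "VW0 b c1 c2 w" and x: "x \<in> cells"
  shows "\<exists>p. Pp w x p"
proof -
  have r: "fst x = 1 \<or> fst x = 2 \<or> fst x = 3" using x by (simp add: cells_iff)
  have "occ (fst x) w = ln (fst x)" using w r by (auto simp: VW0_def ln_def)
  moreover have "snd x - bs (fst x) - 1 < ln (fst x)" using x by (simp add: cells_iff) linarith
  ultimately obtain p where "p < length w" "w!p = fst x" "occ (fst x) (take p w) = snd x - bs (fst x) - 1"
    using occ_exists by metis
  then show ?thesis unfolding Pp_def by blast
qed

lemma tab_Pp:
  assumes w: "VW0 b c1 c2 w" and x: "x \<in> cells"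
  shows "Pp w x (tab w x - 1)" "1 \<le> tab w x"
proof -
  obtain p where p: "Pp w x p" using VW0_Pp_ex[OF w x] by blast
  then have "tab w x = Suc p" by (rule tab_eq[OF x])
  then show "Pp w x (tab w x - 1)" "1 \<le> tab w x" using p by simp_all
qed

lemma tab_inj:
  assumes w: "VW0 b c1 c2 w"
  shows "inj_on (tab w) cells"
proof (rule inj_onI)
  fix x y assume x: "x \<in> cells" and y: "y \<in> cells" and e: "tab w x = tab w y"
  have px: "Pp w x (tab w x - 1)" and py: "Pp w y (tab w x - 1)"
    using tab_Pp[OF w x] tab_Pp[OF w y] e by simp_all
  then have "fst x = fst y" unfolding Pp_def by simp
  moreover have "snd x = snd y"
  proof -
    have e1: "snd x - bs (fst x) - 1 = snd y - bs (fst y) - 1" using px py unfolding Pp_def by simp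
    have "bs (fst x) < snd x" "bs (fst y) < snd y" using x y unfolding cells_iff by auto
    then show ?thesis using e1 \<open>fst x = fst y\<close> by simp
  qed
  ultimately show "x = y" by (simp add: prod_eq_iff)
qed

lemma tab_surj:
  assumes w: "VW0 b c1 c2 w" and q: "q < NN"
  shows "(w!q, bs (w!q) + occ (w!q) (take q w) + 1) \<in> cells"
    and "tab w (w!q, bs (w!q) + occ (w!q) (take q w) + 1) = Suc q"
proof -
  let ?r = "w!q" let ?x = "(?r, bs ?r + occ ?r (take q w) + 1)"
  have len: "length w = NN" by (rule VW0_length[OF w])
  have "?r \<in> set w" using q len by simp
  then have r: "?r = 1 \<or> ?r = 2 \<or> ?r = 3" using w unfolding VW0_def by blast
  have "occ ?r (take (Suc q) w) = occ ?r (take q w) + 1" using occ_take_Suc[of q w ?r] q len by simp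
  moreover have "occ ?r (take (Suc q) w) \<le> occ ?r w" by (rule occ_take_le)
  moreover have "occ ?r w = ln ?r" using w r by (auto simp: VW0_def ln_def)
  ultimately show xc: "?x \<in> cells" using r by (simp add: cells_iff)
  have "Pp w ?x q" unfolding Pp_def using q len by simp
  then show "tab w ?x = Suc q" by (rule tab_eq[OF xc])
qed

lemma tab_range:
  assumes w: "VW0 b c1 c2 w" and x: "x \<in> cells"
  shows "tab w x \<in> {1..NN}"
  using tab_Pp[OF w x] VW0_length[OF w] unfolding Pp_def by auto

lemma tab_bij:
  assumes w: "VW0 b c1 c2 w"
  shows "bij_betw (tab w) cells {1..NN}"
  unfolding bij_betw_def
proof
  show "inj_on (tab w) cells" by (rule tab_inj[OF w])
  show "tab w ` cells = {1..NN}"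
  proof
    show "tab w ` cells \<subseteq> {1..NN}" using tab_range[OF w] by auto
    show "{1..NN} \<subseteq> tab w ` cells"
    proof
      fix v assume v: "v \<in> {1..NN}"
      then obtain q where q: "v = Suc q" "q < NN" by (cases v) auto
      show "v \<in> tab w ` cells" using tab_surj[OF w q(2)] q(1) by (metis imageI)
    qed
  qed
qed

lemma tab_row_mono:
  assumes w: "VW0 b c1 c2 w" and x: "x \<in> cells" and y: "y \<in> cells"
    and r: "fst x = fst y" and s: "snd x < snd y"
  shows "tab w x < tab w y"
proof (rule ccontr)
  let ?p = "tab w x - 1" and ?q = "tab w y - 1"
  assume "\<not> ?thesis"
  then have "?q \<le> ?p" using tab_Pp(2)[OF w x] tab_Pp(2)[OF w y] by simp
  then have "occ (fst x) (take ?q w) \<le> occ (fst x) (take ?p w)" by (rule occ_take_mono)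
  moreover have "occ (fst x) (take ?q w) = snd y - bs (fst x) - 1" using tab_Pp(1)[OF w y] r unfolding Pp_def by simp
  moreover have "occ (fst x) (take ?p w) = snd x - bs (fst x) - 1" using tab_Pp(1)[OF w x] unfolding Pp_def by simp
  moreover have "bs (fst x) < snd x" using x unfolding cells_iff by auto
  ultimately show False using s by linarith
qed

lemma tab_col_mono:
  assumes w: "VW b c1 c2 w" and x: "x \<in> cells" and y: "y \<in> cells"
    and s: "snd x = snd y" and r: "fst x < fst y"
  shows "tab w x < tab w y"
proof -
  have w0: "VW0 b c1 c2 w" and cp: "colP (min c1 c2) w" using w by (auto simp: VW_def)
  let ?c = "min c1 c2"
  have rows: "fst x = 1" "fst y = 3" "snd x \<le> b + 1 + ?c" "b + 1 < snd x"
    using x y s r by (auto simp: cells_iff bs_def ln_def split: if_splits)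
  let ?p = "tab w x - 1" and ?q = "tab w y - 1"
  have px: "Pp w x ?p" and py: "Pp w y ?q" using tab_Pp[OF w0 x] tab_Pp[OF w0 y] by auto
  have j: "occ 3 (take ?q w) = snd x - b - 2" "occ 1 (take ?p w) = snd x - b - 2"
    "w!?q = 3" "w!?p = 1" "?q < length w" "?p < length w"
    using px py rows s unfolding Pp_def by (simp_all add: bs_def)
  have "occ 3 (take (Suc ?q) w) = occ 3 (take ?q w) + 1" using occ_take_Suc[of ?q w 3] j(3,5) by simp
  then have "occ 3 (take (Suc ?q) w) = snd x - b - 1" using j(1) rows(4) by linarith
  moreover have "min (occ 3 (take (Suc ?q) w)) ?c \<le> occ 1 (take (Suc ?q) w)"
    using cp j(5) unfolding colP_def by simp
  ultimately have o1: "snd x - b - 1 \<le> occ 1 (take (Suc ?q) w)" using rows by simp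
  have "?p < ?q"
  proof (rule ccontr)
    assume "\<not> ?p < ?q"
    then have "Suc ?q \<le> ?p \<or> ?p = ?q" by linarith
    then show False
    proof
      assume "Suc ?q \<le> ?p"
      then have "occ 1 (take (Suc ?q) w) \<le> occ 1 (take ?p w)" by (rule occ_take_mono)
      then show False using o1 j(2) rows(4) by linarith
    next
      assume "?p = ?q" then show False using j by simp
    qed
  qed
  then show ?thesis using tab_Pp(2)[OF w0 x] tab_Pp(2)[OF w0 y] by simp
qed

lemma tab_SET:
  assumes w: "VW b c1 c2 w"
  shows "tab w \<in> SET al be"
proof -
  have w0: "VW0 b c1 c2 w" using w by (simp add: VW_def)
  show ?thesis
  proof (rule SET_I)
    show "\<And>x. x \<notin> cells \<Longrightarrow> tab w x = 0" by (simp add: tab_def)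
    show "bij_betw (tab w) cells {1..NN}" by (rule tab_bij[OF w0])
    show "\<And>x y. x \<in> cells \<Longrightarrow> y \<in> cells \<Longrightarrow> fst x = fst y \<Longrightarrow> snd x < snd y \<Longrightarrow> tab w x < tab w y"
      by (rule tab_row_mono[OF w0])
    show "\<And>x y. x \<in> cells \<Longrightarrow> y \<in> cells \<Longrightarrow> snd x = snd y \<Longrightarrow> fst x < fst y \<Longrightarrow> tab w x < tab w y"
      by (rule tab_col_mono[OF w])
  qed
qed

lemma row_of_tab:
  assumes w: "VW0 b c1 c2 w" and q: "q < NN"
  shows "row_of al be (tab w) (Suc q) = w!q"
  using row_of_val[OF tab_inj[OF w] tab_surj(1)[OF w q]] tab_surj(2)[OF w q] by simp

lemma rw_tab:
  assumes w: "VW0 b c1 c2 w"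
  shows "rw (tab w) = w"
proof (rule nth_equalityI)
  show "length (rw (tab w)) = length w" using VW0_length[OF w] by simp
  fix i assume "i < length (rw (tab w))"
  then have i: "i < NN" by simp
  show "rw (tab w) ! i = w ! i" using nth_rw[OF i] row_of_tab[OF w i] by simp
qed

end

context fixes b c1 c2 :: nat begin

abbreviation "A \<equiv> lobster_alpha b c1 c2"
abbreviation "Bt \<equiv> lobster_beta b"
abbreviation "Cs \<equiv> skew_cells A Bt"
abbreviation "N \<equiv> skew_size A Bt"
abbreviation "rwT \<equiv> rw b c1 c2"
abbreviation "tabW \<equiv> tab b c1 c2"

lemma tab_swap:
  assumes u: "VW0 b c1 c2 u" and p: "Suc p < length u" and ne: "u!p \<noteq> u!Suc p"
  shows "swap_entries (Suc p) (tabW u) = tabW (swp p u)"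
proof
  fix x
  show "swap_entries (Suc p) (tabW u) x = tabW (swp p u) x"
  proof (cases "x \<in> Cs")
    case False then show ?thesis by (simp add: tab_def swap_entries_def)
  next
    case True
    define q where "q = tabW u x - 1"
    have Pq: "Pp b u x q" and tq: "tabW u x = Suc q" using tab_Pp[OF u True] unfolding q_def by auto
    define q' where "q' = (if q = p then Suc p else if q = Suc p then p else q)"
    have ql: "q < length u" using Pq unfolding Pp_def by simp
    have "Pp b (swp p u) x q'" unfolding Pp_def
    proof (intro conjI)
      show "q' < length (swp p u)" using ql p unfolding q'_def by auto
      show "swp p u ! q' = fst x" using Pq ql p unfolding Pp_def q'_def by (auto simp: nth_swp)
      have o: "occ (fst x) (take q u) = snd x - bs b (fst x) - 1" and r: "u!q = fst x" using Pq unfolding Pp_def by auto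
      consider "q < p" | "q = p" | "q = Suc p" | "Suc (Suc p) \<le> q" by linarith
      then show "occ (fst x) (take q' (swp p u)) = snd x - bs b (fst x) - 1"
      proof cases
        case 1 then show ?thesis using o take_swp_le[OF p, of q] unfolding q'_def by simp
      next
        case 2 then show ?thesis using o r ne take_swp_Suc[OF p] unfolding q'_def by simp
      next
        case 3
        then have "occ (fst x) (take (Suc p) u) = occ (fst x) (take p u)"
          using occ_take_Suc[of p u "fst x"] p r ne by simp
        then show ?thesis using 3 o take_swp_le[OF p, of p] unfolding q'_def by simp
      next
        case 4 then show ?thesis using o occ_take_swp_ge[OF p 4] unfolding q'_def by simp
      qed
    qed
    then have "tabW (swp p u) x = Suc q'" by (rule tab_eq[OF True])
    then show ?thesis using tq unfolding swap_entries_def q'_def by auto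
  qed
qed

lemma step_D:
  assumes "(U, T) \<in> pi_step A Bt" "U \<noteq> T"
  shows "U \<in> SET A Bt \<and> (\<exists>i. 1 \<le> i \<and> i \<le> N - 1 \<and> row_of A Bt U (i+1) < row_of A Bt U i \<and> T = swap_entries i U)"
  using assms unfolding pi_step_def pi_op_def by (auto split: if_splits)

lemma step_I:
  assumes "U \<in> SET A Bt" "1 \<le> i" "i \<le> N - 1" "row_of A Bt U (i+1) < row_of A Bt U i"
  shows "(U, swap_entries i U) \<in> pi_step A Bt"
  using assms unfolding pi_step_def pi_op_def by auto

lemma star_last:
  assumes "(T', X) \<in> (pi_step A Bt)\<^sup>*"
  shows "X = T' \<or> (\<exists>U\<in>SET A Bt. U \<noteq> X \<and> (U, X) \<in> pi_step A Bt)"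
  using assms
proof (induction rule: rtrancl_induct)
  case base then show ?case by simp
next
  case (step Y Z)
  show ?case
  proof (cases "Y = Z")
    case True then show ?thesis using step.IH by simp
  next
    case False
    have "Y \<in> SET A Bt" using step.hyps(2) unfolding pi_step_def by simp
    then show ?thesis using False step.hyps(2) by blast
  qed
qed

lemma min_iff:
  "T \<in> minimal_SET A Bt \<longleftrightarrow> T \<in> SET A Bt \<and> \<not> (\<exists>U\<in>SET A Bt. U \<noteq> T \<and> (U, T) \<in> pi_step A Bt)"
proof
  assume "T \<in> minimal_SET A Bt"
  then show "T \<in> SET A Bt \<and> \<not> (\<exists>U\<in>SET A Bt. U \<noteq> T \<and> (U, T) \<in> pi_step A Bt)"
    unfolding minimal_SET_def set_le_def by auto
next
  assume a: "T \<in> SET A Bt \<and> \<not> (\<exists>U\<in>SET A Bt. U \<noteq> T \<and> (U, T) \<in> pi_step A Bt)"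
  show "T \<in> minimal_SET A Bt"
    unfolding minimal_SET_def set_le_def using a star_last by blast
qed

lemma minimal_eq: "minimal_SET A Bt = tabW ` {w. MW b c1 c2 w}"
proof
  show "minimal_SET A Bt \<subseteq> tabW ` {w. MW b c1 c2 w}"
  proof
    fix T assume Tm: "T \<in> minimal_SET A Bt"
    then have T: "T \<in> SET A Bt" and nm: "\<not> (\<exists>U\<in>SET A Bt. U \<noteq> T \<and> (U, T) \<in> pi_step A Bt)"
      using min_iff by auto
    define w where "w = rwT T"
    have vw: "VW b c1 c2 w" unfolding w_def by (rule rw_VW[OF T])
    have Tw: "T = tabW w" unfolding w_def using tab_rw[OF T] by simp
    have len: "length w = N" unfolding w_def by simp
    have "MW b c1 c2 w" unfolding MW_def
    proof (intro conjI vw notI)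
      assume "\<exists>p. Suc p < length w \<and> w!p < w!Suc p \<and> VW b c1 c2 (swp p w)"
      then obtain p where p: "Suc p < length w" "w!p < w!Suc p" "VW b c1 c2 (swp p w)" by blast
      let ?u = "swp p w"
      define U where "U = tabW ?u"
      have U: "U \<in> SET A Bt" unfolding U_def by (rule tab_SET[OF p(3)])
      have u0: "VW0 b c1 c2 ?u" using p(3) by (simp add: VW_def)
      have r1: "row_of A Bt U (Suc p) = w!Suc p"
        using row_of_tab[OF u0, of p] p(1) len nth_swp[OF p(1), of p] unfolding U_def by simp
      have r2: "row_of A Bt U (Suc p + 1) = w!p"
        using row_of_tab[OF u0, of "Suc p"] p(1) len nth_swp[OF p(1), of "Suc p"] unfolding U_def by simp
      have st: "(U, swap_entries (Suc p) U) \<in> pi_step A Bt"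
        by (rule step_I[OF U]) (use p len r1 r2 in auto)
      have pu: "Suc p < length ?u" using p(1) by simp
      have "swap_entries (Suc p) U = tabW (swp p ?u)" unfolding U_def
        by (rule tab_swap[OF u0 pu]) (use p nth_swp[OF p(1)] in simp)
      also have "\<dots> = T" using swp_swp[OF p(1)] Tw by simp
      finally have e: "swap_entries (Suc p) U = T" .
      have "U \<noteq> T"
      proof
        assume "U = T"
        then have "rwT U = w" unfolding w_def by simp
        moreover have "rwT U = ?u" unfolding U_def by (rule rw_tab[OF u0])
        ultimately have "?u = w" by simp
        then show False using nth_swp[OF p(1), of p] p by simp
      qed
      then show False using nm U st e by auto
    qed
    then show "T \<in> tabW ` {w. MW b c1 c2 w}" using Tw by blast
  qed
next
  show "tabW ` {w. MW b c1 c2 w} \<subseteq> minimal_SET A Bt"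
  proof
    fix T assume "T \<in> tabW ` {w. MW b c1 c2 w}"
    then obtain w where m: "MW b c1 c2 w" and Tw: "T = tabW w" by auto
    have vw: "VW b c1 c2 w" using m by (simp add: MW_def)
    have w0: "VW0 b c1 c2 w" using vw by (simp add: VW_def)
    have T: "T \<in> SET A Bt" using tab_SET[OF vw] Tw by simp
    have "\<not> (\<exists>U\<in>SET A Bt. U \<noteq> T \<and> (U, T) \<in> pi_step A Bt)"
    proof
      assume "\<exists>U\<in>SET A Bt. U \<noteq> T \<and> (U, T) \<in> pi_step A Bt"
      then obtain U where U: "U \<in> SET A Bt" "U \<noteq> T" "(U, T) \<in> pi_step A Bt" by blast
      obtain i where i: "1 \<le> i" "i \<le> N - 1" "row_of A Bt U (i+1) < row_of A Bt U i" "T = swap_entries i U"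
        using step_D[OF U(3) U(2)] by blast
      define u where "u = rwT U"
      have vu: "VW b c1 c2 u" unfolding u_def by (rule rw_VW[OF U(1)])
      have u0: "VW0 b c1 c2 u" using vu by (simp add: VW_def)
      have Uu: "U = tabW u" unfolding u_def using tab_rw[OF U(1)] by simp
      have lenu: "length u = N" unfolding u_def by simp
      obtain p where ip: "i = Suc p" using i(1) by (cases i) auto
      have pl: "Suc p < length u" using i(2) ip lenu i(1) by linarith
      have "row_of A Bt U (Suc p) = u!p" using row_of_tab[OF u0, of p] pl lenu Uu by simp
      moreover have "row_of A Bt U (Suc p + 1) = u!Suc p" using row_of_tab[OF u0, of "Suc p"] pl lenu Uu by simp
      ultimately have lt: "u!Suc p < u!p" using i(3) ip by simp
      have "T = tabW (swp p u)" using i(4) ip Uu tab_swap[OF u0 pl] lt by simp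
      moreover have "VW0 b c1 c2 (swp p u)" using u0 VW0_swp[OF pl] by simp
      ultimately have "rwT T = swp p u" using rw_tab by simp
      moreover have "rwT T = w" using Tw rw_tab[OF w0] by simp
      ultimately have wu: "w = swp p u" by simp
      have pw: "Suc p < length w" using wu pl by simp
      have "w!p < w!Suc p" using wu nth_swp[OF pl] pl lt by simp
      moreover have "VW b c1 c2 (swp p w)" using wu swp_swp[OF pl] vu by simp
      ultimately show False using m pw unfolding MW_def by blast
    qed
    then show "T \<in> minimal_SET A Bt" using min_iff T by blast
  qed
qed

lemma card_minimal: "card (minimal_SET A Bt) = card {w. MW b c1 c2 w}"
proof -
  have "inj_on tabW {w. MW b c1 c2 w}"
  proof (rule inj_onI)
    fix v w assume "v \<in> {w. MW b c1 c2 w}" "w \<in> {w. MW b c1 c2 w}" "tabW v = tabW w"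
    then show "v = w" using rw_tab by (metis MW_def VW_def mem_Collect_eq)
  qed
  then show ?thesis using minimal_eq by (simp add: card_image)
qed

lemma finite_minimal: "finite (minimal_SET A Bt)"
  using minimal_eq finite_MW by simp

end

lemma letter_cases2: "x \<noteq> B \<longleftrightarrow> x = C"
  by (cases x) auto

lemma BC_length: "w \<in> BC_words nb nc \<Longrightarrow> length w = nb + nc"
proof -
  assume "w \<in> BC_words nb nc"
  moreover have "length (filter (\<lambda>x. x = B) w) + length (filter (\<lambda>x. \<not> x = B) w) = length w"
    by (rule sum_length_filter_compl)
  ultimately show ?thesis by (simp add: BC_words_def letter_cases2)
qed

lemma finite_BC: "finite (BC_words nb nc)"
proof (rule finite_subset)
  show "BC_words nb nc \<subseteq> {w. set w \<subseteq> {B, C} \<and> length w = nb + nc}"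
    using BC_length letter_cases2 by blast
  show "finite {w. set w \<subseteq> {B, C} \<and> length w = nb + nc}"
    by (rule finite_lists_length_eq) simp
qed

lemma BC_set: "BC_words nb nc = {w::letter list. w = [] \<and> nb = 0 \<and> nc = 0} \<union> Cons B ` {w. 0 < nb \<and> w \<in> BC_words (nb-1) nc}
   \<union> Cons C ` {w. 0 < nc \<and> w \<in> BC_words nb (nc-1)}"
proof (rule set_eqI)
  fix w
  show "w \<in> BC_words nb nc \<longleftrightarrow> w \<in> {w::letter list. w = [] \<and> nb = 0 \<and> nc = 0} \<union> Cons B ` {w. 0 < nb \<and> w \<in> BC_words (nb-1) nc}
   \<union> Cons C ` {w. 0 < nc \<and> w \<in> BC_words nb (nc-1)}"
  proof (cases w)
    case Nil then show ?thesis by (auto simp: BC_words_def)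
  next
    case (Cons x w')
    then show ?thesis by (cases x) (auto simp: BC_words_def)
  qed
qed

lemma card_BC: "card (BC_words nb nc) = (nb + nc) choose nb"
proof (induction "nb + nc" arbitrary: nb nc rule: less_induct)
  case less
  have d1: "{w::letter list. w = [] \<and> nb = 0 \<and> nc = 0} \<inter> (Cons B ` {w. 0 < nb \<and> w \<in> BC_words (nb-1) nc}) = {}" by auto
  have d2: "({w::letter list. w = [] \<and> nb = 0 \<and> nc = 0} \<union> Cons B ` {w. 0 < nb \<and> w \<in> BC_words (nb-1) nc})
     \<inter> Cons C ` {w. 0 < nc \<and> w \<in> BC_words nb (nc-1)} = {}" by auto
  have f1: "finite {w::letter list. w = [] \<and> nb = 0 \<and> nc = 0}" by (rule finite_subset[of _ "{[]}"]) auto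
  have f2: "finite {w. 0 < nb \<and> w \<in> BC_words (nb-1) nc}" using finite_BC[of "nb-1" nc] by (rule rev_finite_subset) auto
  have f3: "finite {w. 0 < nc \<and> w \<in> BC_words nb (nc-1)}" using finite_BC[of nb "nc-1"] by (rule rev_finite_subset) auto
  have "card (BC_words nb nc) = card {w::letter list. w = [] \<and> nb = 0 \<and> nc = 0} + card {w. 0 < nb \<and> w \<in> BC_words (nb-1) nc}
      + card {w. 0 < nc \<and> w \<in> BC_words nb (nc-1)}"
  proof -
    let ?S1 = "{w::letter list. w = [] \<and> nb = 0 \<and> nc = 0}"
    let ?S2 = "{w. 0 < nb \<and> w \<in> BC_words (nb-1) nc}"
    let ?S3 = "{w. 0 < nc \<and> w \<in> BC_words nb (nc-1)}"
    have "card (?S1 \<union> Cons B ` ?S2 \<union> Cons C ` ?S3) = card (?S1 \<union> Cons B ` ?S2) + card (Cons C ` ?S3)"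
      by (rule card_Un_disjoint[OF _ _ d2]) (use f1 f2 f3 in simp_all)
    also have "card (?S1 \<union> Cons B ` ?S2) = card ?S1 + card (Cons B ` ?S2)"
      by (rule card_Un_disjoint) (use f1 f2 d1 in simp_all)
    also have "card (Cons B ` ?S2) = card ?S2" by (simp add: card_image)
    also have "card (Cons C ` ?S3) = card ?S3" by (simp add: card_image)
    finally show ?thesis using BC_set[of nb nc] by simp
  qed
  also have "\<dots> = (nb + nc) choose nb"
  proof (cases nb)
    case 0
    then show ?thesis
    proof (cases nc)
      case 0 then show ?thesis using \<open>nb = 0\<close> by simp
    next
      case (Suc m)
      have "{w. 0 < nc \<and> w \<in> BC_words nb (nc-1)} = BC_words nb (nc - 1)" using Suc by simp
      then show ?thesis using less[of nb "nc-1"] Suc 0 by simp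
    qed
  next
    case (Suc nb')
    show ?thesis
    proof (cases nc)
      case 0
      have "{w. 0 < nb \<and> w \<in> BC_words (nb-1) nc} = BC_words (nb-1) nc" using Suc by simp
      then show ?thesis using less[of "nb-1" nc] Suc 0 by simp
    next
      case (Suc m)
      have "{w. 0 < nb \<and> w \<in> BC_words (nb-1) nc} = BC_words (nb-1) nc" using \<open>nb = Suc nb'\<close> by simp
      moreover have "{w. 0 < nc \<and> w \<in> BC_words nb (nc-1)} = BC_words nb (nc - 1)" using Suc by simp
      ultimately show ?thesis using less[of "nb-1" nc] less[of nb "nc-1"] Suc \<open>nb = Suc nb'\<close> by simp
    qed
  qed
  finally show ?case .
qed

definition pairs :: "nat \<Rightarrow> nat list" where "pairs n = concat (replicate n [1,3])"

lemma pairs_simps[simp]: "pairs 0 = []" "pairs (Suc n) = 1 # 3 # pairs n"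
  by (simp_all add: pairs_def)

lemma length_pairs[simp]: "length (pairs n) = 2 * n"
  by (induction n) auto

lemma occ_pairs[simp]: "occ r (pairs n) = (if r = 1 \<or> r = 3 then n else 0)"
  by (induction n) auto

lemma pairs_add: "pairs (m + k) = pairs m @ pairs k"
  by (simp add: pairs_def replicate_add)

lemma pairs_split: "k < n \<Longrightarrow> pairs n = pairs k @ 1 # 3 # pairs (n - k - 1)"
proof -
  assume "k < n"
  then obtain d where d0: "n = Suc (k + d)" using less_imp_Suc_add by blast
  then have d: "n = k + Suc d" by simp
  have "pairs n = pairs k @ pairs (Suc d)" by (simp only: d pairs_add)
  moreover have "n - k - 1 = d" using d by simp
  ultimately show ?thesis by simp
qed

lemma replicate_split: "k < n \<Longrightarrow> replicate n a = replicate k a @ a # replicate (n - k - 1) a"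
proof -
  assume "k < n"
  then obtain d where d0: "n = Suc (k + d)" using less_imp_Suc_add by blast
  then have d: "n = k + Suc d" by simp
  have "replicate n a = replicate k a @ replicate (Suc d) a" by (simp only: d replicate_add)
  moreover have "n - k - 1 = d" using d by simp
  ultimately show ?thesis by simp
qed

definition vw :: "nat \<Rightarrow> nat \<Rightarrow> nat list" where
  "vw c1 c2 = pairs (min c1 c2) @ replicate (c1 - min c1 c2) 3 @ replicate (c2 - min c1 c2) 1"

lemma MW_vw: "MW 0 c1 c2 (vw c1 c2)"
proof (induction c1 arbitrary: c2)
  case 0
  have "vw 0 c2 = wdec 0 0 c2" by (simp add: vw_def wdec_def)
  moreover have "{w. MW 0 0 c2 w} = {wdec 0 0 c2}" by (rule MW_zero) simp
  ultimately show ?case by blast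
next
  case (Suc c1)
  show ?case
  proof (cases c2)
    case 0
    have "vw (Suc c1) c2 = wdec 0 (Suc c1) c2" using 0 by (simp add: vw_def wdec_def)
    moreover have "{w. MW 0 (Suc c1) c2 w} = {wdec 0 (Suc c1) c2}" by (rule MW_zero) (simp add: 0)
    ultimately show ?thesis by blast
  next
    case (Suc c2')
    have e: "vw (Suc c1) c2 = 1 # 3 # vw c1 c2'" using Suc by (simp add: vw_def)
    have "MW 0 (Suc c1 - 1) (c2 - 1) (vw c1 c2')" using Suc.IH[of c2'] Suc by simp
    then have "MW 0 (Suc c1) c2 (1#3#vw c1 c2')" by (rule MW_13I) (use Suc in simp_all)
    then show ?thesis using e by simp
  qed
qed

definition w0 :: "nat \<Rightarrow> nat \<Rightarrow> nat \<Rightarrow> nat list" where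
  "w0 b c1 c2 = replicate b 2 @ vw c1 c2"

lemma MW_w0: "0 < min c1 c2 \<Longrightarrow> MW b c1 c2 (w0 b c1 c2)"
proof (induction b)
  case 0 then show ?case using MW_vw by (simp add: w0_def)
next
  case (Suc b)
  have "MW (Suc b - 1) c1 c2 (w0 b c1 c2)" using Suc by simp
  then have "MW (Suc b) c1 c2 (2 # w0 b c1 c2)" by (rule MW_2I) (use Suc in simp_all)
  then show ?case by (simp add: w0_def)
qed



context fixes b c1 c2 :: nat begin

abbreviation "LA \<equiv> lobster_alpha b c1 c2"
abbreviation "LB \<equiv> lobster_beta b"
abbreviation "LC \<equiv> skew_cells LA LB"
abbreviation "tw \<equiv> tab b c1 c2"

lemma card_cells_P:
  fixes P :: "nat \<times> nat \<Rightarrow> bool"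
  shows "card {y\<in>LC. P y} = card {j. b+1<j \<and> j \<le> b+1+c2 \<and> P (1,j)} + card {j. 1<j \<and> j \<le> 1+b \<and> P (2,j)}
     + card {j. b+1<j \<and> j \<le> b+1+c1 \<and> P (3,j)}"
proof -
  let ?S1 = "{j. b+1<j \<and> j \<le> b+1+c2 \<and> P (1,j)}"
  let ?S2 = "{j. 1<j \<and> j \<le> 1+b \<and> P (2,j)}"
  let ?S3 = "{j. b+1<j \<and> j \<le> b+1+c1 \<and> P (3,j)}"
  have e: "{y\<in>LC. P y} = Pair (1::nat) ` ?S1 \<union> Pair (2::nat) ` ?S2 \<union> Pair (3::nat) ` ?S3"
    by (auto simp: cells_iff bs_def ln_def)
  have f1: "finite ?S1" "finite ?S2" "finite ?S3" by (auto intro: finite_subset[of _ "{..b+1+c1+c2}"])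
  have "card (Pair (1::nat) ` ?S1 \<union> Pair (2::nat) ` ?S2 \<union> Pair (3::nat) ` ?S3) = card (Pair (1::nat) ` ?S1 \<union> Pair (2::nat) ` ?S2) + card (Pair (3::nat) ` ?S3)"
    by (rule card_Un_disjoint) (use f1 in auto)
  also have "card (Pair (1::nat) ` ?S1 \<union> Pair (2::nat) ` ?S2) = card (Pair (1::nat) ` ?S1) + card (Pair (2::nat) ` ?S2)"
    by (rule card_Un_disjoint) (use f1 in auto)
  finally show ?thesis using e by (simp add: card_image inj_on_def)
qed

lemma card_le_filter: "card {j. a<j \<and> j \<le> a+l \<and> (j < col \<or> (j = col \<and> Q))} = min l ((if Q then col else col - 1) - a)"
proof -
  have "{j. a<j \<and> j \<le> a+l \<and> (j < col \<or> (j = col \<and> Q))} = {j. a<j \<and> j \<le> a+l \<and> j \<le> (if Q then col else col - 1)}"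
    by auto
  then show ?thesis using card_Ioc_filter2 by simp
qed

lemma Scol_val:
  assumes "(r, col) \<in> LC"
  shows "S_col LA LB (r, col) = min c2 ((if 1 \<le> r then col else col-1) - (b+1)) + min b ((if 2 \<le> r then col else col-1) - 1)
     + min c1 ((if 3 \<le> r then col else col - 1) - (b+1))"
proof -
  have "S_col LA LB (r, col) = card {y\<in>LC. snd y < col \<or> (snd y = col \<and> fst y \<le> r)}"
    using assms by (simp add: S_col_def)
  also have "\<dots> = card {j. b+1<j \<and> j \<le> b+1+c2 \<and> (j < col \<or> (j = col \<and> 1 \<le> r))}
     + card {j. 1<j \<and> j \<le> 1+b \<and> (j < col \<or> (j = col \<and> 2 \<le> r))}
     + card {j. b+1<j \<and> j \<le> b+1+c1 \<and> (j < col \<or> (j = col \<and> 3 \<le> r))}"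
    using card_cells_P[of "\<lambda>y. snd y < col \<or> (snd y = col \<and> fst y \<le> r)"] by simp
  finally show ?thesis by (simp only: card_le_filter)
qed

lemma tab_app:
  assumes x: "x \<in> LC" and w: "w = X @ fst x # Y" and o: "occ (fst x) X = snd x - bs b (fst x) - 1"
  shows "tw w x = Suc (length X)"
proof (rule tab_eq[OF x])
  show "Pp b w x (length X)" unfolding Pp_def using w o by simp
qed

lemma tab_app2:
  assumes x: "(r, col) \<in> LC" and w: "w = X @ r # Y" and o: "occ r X = col - bs b r - 1"
  shows "tw w (r, col) = Suc (length X)"
  using tab_app[of "(r, col)" w X Y] assms by simp

lemma Scol_eq:
  assumes c: "0 < min c1 c2"
  shows "S_col LA LB = tw (w0 b c1 c2)"
proof
  fix x
  show "S_col LA LB x = tw (w0 b c1 c2) x"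
  proof (cases "x \<in> LC")
    case False then show ?thesis by (simp add: S_col_def tab_def)
  next
    case True
    obtain r col where x: "x = (r, col)" by (cases x)
    have xc: "(r, col) \<in> LC" using True x by simp
    have rr: "r = 1 \<or> r = 2 \<or> r = 3" using xc by (simp add: cells_Pair)
    let ?c = "min c1 c2"
    consider "r = 1" | "r = 2" | "r = 3" using rr by blast
    then show ?thesis
    proof cases
      case 2
      have "bs b 2 < col \<and> col \<le> bs b 2 + ln b c1 c2 2" using xc 2 by (simp add: cells_Pair)
      then have cb: "1 < col" "col \<le> 1 + b" by (simp_all add: bs_def ln_def)
      define k where "k = col - 2"
      have kb: "k < b" using cb unfolding k_def by simp
      have "w0 b c1 c2 = replicate k 2 @ 2 # (replicate (b - k - 1) 2 @ vw c1 c2)"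
        using replicate_split[OF kb, of "2::nat"] by (simp add: w0_def)
      moreover have "(2, col) \<in> LC" using xc 2 by simp
      moreover have "occ 2 (replicate k 2) = col - bs b 2 - 1" using cb by (simp add: bs_def k_def)
      ultimately have "tw (w0 b c1 c2) (2, col) = Suc (length (replicate k (2::nat)))"
        using tab_app2 by blast
      then have "tw (w0 b c1 c2) x = Suc k" using x 2 by simp
      moreover have "S_col LA LB x = col - 1" using Scol_val[OF xc] x 2 cb by simp
      ultimately show ?thesis using cb unfolding k_def by simp
    next
      case 1
      have "bs b 1 < col \<and> col \<le> bs b 1 + ln b c1 c2 1" using xc 1 by (simp add: cells_Pair)
      then have cb: "b + 1 < col" "col \<le> b + 1 + c2" by (simp_all add: bs_def ln_def)
      define j where "j = col - b - 1"
      have j: "1 \<le> j" "j \<le> c2" "col = b + 1 + j" using cb unfolding j_def by simp_all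
      have sc: "S_col LA LB x = j + b + min c1 (j - 1)" using Scol_val[OF xc] x 1 j by simp
      show ?thesis
      proof (cases "j \<le> ?c")
        case True
        have "j \<le> c1" "j \<le> c2" using True by auto
        then have "j - 1 < c1" "j - 1 < c2" using j by linarith+
        then have lt: "j - 1 < ?c" by simp
        have "w0 b c1 c2 = (replicate b 2 @ pairs (j-1)) @ 1 # (3 # pairs (?c - (j-1) - 1) @
              replicate (c1 - ?c) 3 @ replicate (c2 - ?c) 1)"
          using pairs_split[OF lt] by (simp add: w0_def vw_def)
        moreover have xcR: "(1, col) \<in> LC" using xc \<open>r = 1\<close> by simp
        ultimately have "tw (w0 b c1 c2) (1, col) = Suc (length (replicate b 2 @ pairs (j-1)))"
          by (intro tab_app2) (use j j in \<open>simp_all add: bs_def\<close>)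
        then have "tw (w0 b c1 c2) x = Suc (length (replicate b 2 @ pairs (j-1)))" using x \<open>r = 1\<close> by simp
        then show ?thesis using sc True j by simp
      next
        case False
        then have c1c: "?c = c1" "c1 < j" using j by (auto simp: min_def split: if_splits)
        have lt: "j - c1 - 1 < c2 - c1" using j c1c by simp
        have "w0 b c1 c2 = (replicate b 2 @ pairs c1 @ replicate (j - c1 - 1) 1) @ 1 # replicate (c2 - c1 - (j - c1 - 1) - 1) 1"
          using replicate_split[OF lt, of "1::nat"] c1c by (simp add: w0_def vw_def)
        moreover have xcR: "(1, col) \<in> LC" using xc \<open>r = 1\<close> by simp
        ultimately have "tw (w0 b c1 c2) (1, col) = Suc (length (replicate b 2 @ pairs c1 @ replicate (j - c1 - 1) 1))"
          by (intro tab_app2) (use j j c1c in \<open>simp_all add: bs_def\<close>)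
        then have "tw (w0 b c1 c2) x = Suc (length (replicate b 2 @ pairs c1 @ replicate (j - c1 - 1) 1))" using x \<open>r = 1\<close> by simp
        then show ?thesis using sc c1c j by simp
      qed
    next
      case 3
      have "bs b 3 < col \<and> col \<le> bs b 3 + ln b c1 c2 3" using xc 3 by (simp add: cells_Pair)
      then have cb: "b + 1 < col" "col \<le> b + 1 + c1" by (simp_all add: bs_def ln_def)
      define j where "j = col - b - 1"
      have j: "1 \<le> j" "j \<le> c1" "col = b + 1 + j" using cb unfolding j_def by simp_all
      have sc: "S_col LA LB x = min c2 j + b + j" using Scol_val[OF xc] x 3 j by simp
      show ?thesis
      proof (cases "j \<le> ?c")
        case True
        have "j \<le> c1" "j \<le> c2" using True by auto
        then have "j - 1 < c1" "j - 1 < c2" using j by linarith+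
        then have lt: "j - 1 < ?c" by simp
        have "w0 b c1 c2 = (replicate b 2 @ pairs (j-1) @ [1]) @ 3 # (pairs (?c - (j-1) - 1) @
              replicate (c1 - ?c) 3 @ replicate (c2 - ?c) 1)"
          using pairs_split[OF lt] by (simp add: w0_def vw_def)
        moreover have xcR: "(3, col) \<in> LC" using xc \<open>r = 3\<close> by simp
        ultimately have "tw (w0 b c1 c2) (3, col) = Suc (length (replicate b 2 @ pairs (j-1) @ [1]))"
          by (intro tab_app2) (use j j in \<open>simp_all add: bs_def\<close>)
        then have "tw (w0 b c1 c2) x = Suc (length (replicate b 2 @ pairs (j-1) @ [1]))" using x \<open>r = 3\<close> by simp
        then have t: "tw (w0 b c1 c2) x = Suc (Suc (b + 2 * (j - 1)))" by simp
        have "min c2 j = j" using True by auto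
        then have "S_col LA LB x = j + b + j" using sc by simp
        then show ?thesis using t j by linarith
      next
        case False
        then have c2c: "?c = c2" "c2 < j" using j by (auto simp: min_def split: if_splits)
        have lt: "j - c2 - 1 < c1 - c2" using j c2c by simp
        have "w0 b c1 c2 = (replicate b 2 @ pairs c2 @ replicate (j - c2 - 1) 3) @ 3 # replicate (c1 - c2 - (j - c2 - 1) - 1) 3"
          using replicate_split[OF lt, of "3::nat"] c2c by (simp add: w0_def vw_def)
        moreover have xcR: "(3, col) \<in> LC" using xc \<open>r = 3\<close> by simp
        ultimately have "tw (w0 b c1 c2) (3, col) = Suc (length (replicate b 2 @ pairs c2 @ replicate (j - c2 - 1) 3))"
          by (intro tab_app2) (use j j c2c in \<open>simp_all add: bs_def\<close>)
        then have "tw (w0 b c1 c2) x = Suc (length (replicate b 2 @ pairs c2 @ replicate (j - c2 - 1) 3))" using x \<open>r = 3\<close> by simp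
        then show ?thesis using sc c2c j by simp
      qed
    qed
  qed
qed

end


theorem theorem5p4:
  fixes b c1 c2 :: nat
  assumes "0 < b" and "0 < c1" and "0 < c2"
  shows "(\<exists>f. bij_betw f (minimal_SET (lobster_alpha b c1 c2) (lobster_beta b))
                          (BC_words b (min c1 c2)))
         \<and> card (minimal_SET (lobster_alpha b c1 c2) (lobster_beta b)) = (b + min c1 c2) choose b
         \<and> S_col (lobster_alpha b c1 c2) (lobster_beta b) \<in> minimal_SET (lobster_alpha b c1 c2) (lobster_beta b)"
proof (intro conjI)
  have c: "0 < min c1 c2" using assms by simp
  show cm: "card (minimal_SET (lobster_alpha b c1 c2) (lobster_beta b)) = (b + min c1 c2) choose b"
    using card_minimal[of b c1 c2] card_MW[of b c1 c2] by simp
  show "\<exists>f. bij_betw f (minimal_SET (lobster_alpha b c1 c2) (lobster_beta b)) (BC_words b (min c1 c2))"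
    by (rule finite_same_card_bij) (use finite_minimal finite_BC cm card_BC in auto)
  have "S_col (lobster_alpha b c1 c2) (lobster_beta b) = tab b c1 c2 (w0 b c1 c2)" by (rule Scol_eq[OF c])
  moreover have "tab b c1 c2 (w0 b c1 c2) \<in> minimal_SET (lobster_alpha b c1 c2) (lobster_beta b)"
    using minimal_eq[of b c1 c2] MW_w0[OF c] by auto
  ultimately show "S_col (lobster_alpha b c1 c2) (lobster_beta b) \<in> minimal_SET (lobster_alpha b c1 c2) (lobster_beta b)" by simp
qed


end
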